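(* If $\omega_r\in\mathrm{Eval}(G/\Omega_j)$ with multiplicity $m$, then $\omega_{r+\aleph p}\in\mathrm{Eval}(G/\Omega_j)$ with multiplicity $m$, for all $p=1,\dots,k/\aleph$.
   Context: Non-singular monad matrices are $(A,B,C,D)$ with $A\in GL(k,\mathbb{C})$, $B\in Mat_{k\times k}(\mathbb{C})$, $C\in Mat_{k\times 2}(\mathbb{C})$, $D\in Mat_{2\times k}(\mathbb{C})$, satisfying $[A,B]+CD=0$ and the full-rank conditions. Fix $j\in\mathbb{Z}_{2k}$ even; $(A,B,C,D)$ is such that there is $G\in GL(k,\mathbb{C})$ with $e^{\imath\frac{2j\pi}{k}}A=GAG^{-1}$, $e^{\imath\frac{2\pi}{k}}B=GBG^{-1}$, $e^{\imath\frac{\pi}{k}}C=GC\,\mathrm{adj}(\sigma_{2j\pi/k})$, $e^{\imath\frac{\pi}{k}}D=\sigma_{2j\pi/k}DG^{-1}$ ($\sigma_\varphi=\mathrm{diag}(e^{-\imath\frac{3\varphi}{4}},e^{-\imath\frac{\varphi}{4}})$, $\mathrm{adj}(\sigma)=\det(\sigma)\sigma^{-1}$), in a basis where $G=\Omega_j\,\mathrm{diag}\{x_1,\dots,x_k\}$ with $x_r$ $k$-th roots of unity. Notation: $\aleph=\gcd(j,k)$, $\Omega_j=e^{\imath\frac{(2-j)\pi}{2k}}$, $\omega_r=e^{\imath\frac{2\pi r}{k}}$ (indices mod $k$). *)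

theory Defs
  imports "Jordan_Normal_Form.Jordan_Normal_Form" "HOL-Computational_Algebra.Polynomial"
begin

(* omega_r = e^{i 2 pi r / k}; indices taken mod k automatically *)
definition omega :: "nat \<Rightarrow> int \<Rightarrow> complex" where
  "omega k r = exp (\<i> * of_real (2 * pi * real_of_int r / real k))"

definition Omega :: "nat \<Rightarrow> nat \<Rightarrow> complex" where
  "Omega k j = exp (\<i> * of_real ((2 - real j) * pi / (2 * real k)))"

definition sigma :: "real \<Rightarrow> complex mat" where
  "sigma \<phi> = mat 2 2 (\<lambda>(a, b). if a = b then
      (if a = 0 then exp (- \<i> * of_real (3 * \<phi> / 4)) else exp (- \<i> * of_real (\<phi> / 4)))
    else 0)"

(* adj(sigma) = det(sigma) sigma^{-1} (classical adjugate) *)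
definition adj :: "complex mat \<Rightarrow> complex mat" where
  "adj S = adj_mat S"

(* non-singular monad matrices: A in GL(k), B k x k, C k x 2, D 2 x k,
   [A,B] + CD = 0, and the full-rank conditions: for all x, y in C,
   alpha(x,y) = (A - x; B - y; D) is injective and
   beta(x,y) = (-(B - y), A - x, C) is surjective (equivalently its
   transpose is injective). *)
definition nonsingular_monad ::
  "nat \<Rightarrow> complex mat \<Rightarrow> complex mat \<Rightarrow> complex mat \<Rightarrow> complex mat \<Rightarrow> bool" where
  "nonsingular_monad k A B C D \<longleftrightarrow>
     A \<in> carrier_mat k k \<and> B \<in> carrier_mat k k \<and> C \<in> carrier_mat k 2 \<and> D \<in> carrier_mat 2 k \<and>
     invertible_mat A \<and>
     (A * B - B * A) + C * D = 0\<^sub>m k k \<and>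
     (\<forall>x y. \<forall>v \<in> carrier_vec k.
        (A - x \<cdot>\<^sub>m 1\<^sub>m k) *\<^sub>v v = 0\<^sub>v k \<and> (B - y \<cdot>\<^sub>m 1\<^sub>m k) *\<^sub>v v = 0\<^sub>v k \<and> D *\<^sub>v v = 0\<^sub>v 2
        \<longrightarrow> v = 0\<^sub>v k) \<and>
     (\<forall>x y. \<forall>w \<in> carrier_vec k.
        transpose_mat (A - x \<cdot>\<^sub>m 1\<^sub>m k) *\<^sub>v w = 0\<^sub>v k \<and> transpose_mat (B - y \<cdot>\<^sub>m 1\<^sub>m k) *\<^sub>v w = 0\<^sub>v k \<and> transpose_mat C *\<^sub>v w = 0\<^sub>v 2
        \<longrightarrow> w = 0\<^sub>v k)"

end

theory Submission
  imports Defs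
begin

lemma order_lin_prod:
  "order (l::complex) (\<Prod>a\<leftarrow>xs. [:-a,1:]) = length (filter (\<lambda>a. a = l) xs)"
proof (induction xs)
  case Nil
  then show ?case by (simp add: order_0I)
next
  case (Cons a xs)
  have nz: "(\<Prod>a\<leftarrow>xs. [:-a,1:]) \<noteq> (0::complex poly)"
    unfolding prod_list_zero_iff by auto
  have "order l ([:-a,1:] * (\<Prod>a\<leftarrow>xs. [:-a,1:])) = order l [:-a,1:] + order l (\<Prod>a\<leftarrow>xs. [:-a,1:])"
    by (intro order_mult no_zero_divisors nz) simp
  moreover have "order l [:-a,1:] = (if a = l then 1 else 0)"
  proof (cases "a = l")
    case True then show ?thesis using order_power_n_n[of l 1] by simp
  next
    case False then show ?thesis by (simp add: order_0I)
  qed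
  ultimately show ?case using Cons by simp
qed

lemma lin_prod_nz: "(\<Prod>a\<leftarrow>xs. [:-a,1:]) \<noteq> (0::complex poly)"
  unfolding prod_list_zero_iff by auto

lemma omega_cong: assumes "k > 0" "a mod int k = b mod int k" shows "omega k a = omega k b"
proof -
  from assms(2) obtain q where q: "a = b + int k * q"
    by (metis mod_eqE mult.commute)
  have e: "2 * pi * real_of_int a / real k = 2 * pi * real_of_int b / real k + 2 * pi * real_of_int q"
    using assms(1) by (simp add: q field_simps)
  have "exp (\<i> * of_real (2 * pi * real_of_int q)) = 1"
    using cis_multiple_2pi[of "real_of_int q"] by (simp add: cis_conv_exp mult.commute)
  then show ?thesis unfolding omega_def e by (simp add: distrib_left exp_add)
qed

lemma omega_mult: "omega k a * omega k b = omega k (a + b)"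
  unfolding omega_def by (simp add: exp_add[symmetric] field_simps add_divide_distrib)

lemma omega_pow: "omega k a ^ n = omega k (int n * a)"
  unfolding omega_def by (simp add: exp_of_nat_mult[symmetric] field_simps)


lemma cnt_shift:
  fixes x :: "nat \<Rightarrow> complex" and c :: complex
  assumes A: "(A::complex mat) \<in> carrier_mat k k" and dA: "det A \<noteq> 0"
    and rel: "\<forall>i<k. \<forall>t<k. A $$ (i,t) \<noteq> 0 \<longrightarrow> x i = c * x t" and c: "c \<noteq> 0"
  shows "card {s. s<k \<and> x s = \<nu>} \<le> card {s. s<k \<and> x s = \<nu> / c}"
proof -
  from dA obtain p where p: "p permutes {0..<k}" and pr: "(\<Prod>i = 0..<k. A $$ (i, p i)) \<noteq> 0"
    unfolding det_def'[OF A] by (metis (no_types, lifting) mem_Collect_eq mult_zero_right sum.neutral)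
  have nz: "A $$ (i, p i) \<noteq> 0" if "i < k" for i
    using pr that by (auto simp: prod_zero_iff)
  have pk: "p i < k" if "i < k" for i using p that by (auto dest: permutes_in_image)
  have "inj_on p {s. s<k \<and> x s = \<nu>}"
    using permutes_inj[OF p] by (auto intro: inj_on_subset)
  moreover have "p ` {s. s<k \<and> x s = \<nu>} \<subseteq> {s. s<k \<and> x s = \<nu> / c}"
  proof
    fix y assume "y \<in> p ` {s. s<k \<and> x s = \<nu>}"
    then obtain i where i: "i < k" "x i = \<nu>" "y = p i" by auto
    have "x i = c * x (p i)" using rel nz[OF i(1)] pk[OF i(1)] i(1) by blast
    then show "y \<in> {s. s<k \<and> x s = \<nu> / c}" using i pk c by (simp add: nonzero_mult_div_cancel_left)
  qed
  ultimately show ?thesis by (intro card_inj_on_le) auto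
qed

lemma cyc_le:
  fixes f :: "complex \<Rightarrow> nat"
  assumes le: "\<And>v. f v \<le> f (v * d)"
  shows "f (v * d) \<le> f (v * d ^ Suc n)"
proof (induction n)
  case 0 then show ?case by simp
next
  case (Suc n)
  have "f (v * d ^ Suc n) \<le> f (v * d ^ Suc n * d)" by (rule le)
  moreover have "v * d ^ Suc n * d = v * d ^ Suc (Suc n)" by (simp add: mult_ac)
  ultimately show ?case using Suc.IH by (metis le_trans)
qed

lemma cyc_eq:
  fixes f :: "complex \<Rightarrow> nat"
  assumes le: "\<And>v. f v \<le> f (v * d)" and dk: "d ^ k = 1" and k: "k > 0" and d: "d \<noteq> 0"
  shows "f (v * (1/d) ^ n) = f v"
proof -
  have eq: "f w = f (w * d)" for w
  proof -
    obtain n where n: "k = Suc n" using k by (cases k) auto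
    have "f (w * d) \<le> f (w * d ^ Suc n)" by (rule cyc_le[where f=f, OF le])
    then have "f (w * d) \<le> f w" using dk n by simp
    with le[of w] show ?thesis by simp
  qed
  show ?thesis
  proof (induction n)
    case 0 then show ?case by simp
  next
    case (Suc n)
    have "f (v * (1/d) ^ Suc n) = f (v * (1/d) ^ Suc n * d)" by (rule eq)
    also have "v * (1/d) ^ Suc n * d = v * (1/d) ^ n" using d by (simp add: field_simps)
    finally show ?case using Suc by simp
  qed
qed

theorem mainTheorem9:
  fixes k j :: nat and A B C D G Gi :: "complex mat" and x :: "nat \<Rightarrow> complex"
    and r :: int and m :: nat
  assumes k_pos: "k > 0"
    and j_range: "j < 2 * k" and j_even: "even j"
    and monad: "nonsingular_monad k A B C D"
    and G_carrier: "G \<in> carrier_mat k k" and G_inv: "Gi \<in> carrier_mat k k" and G_inv2: "G * Gi = 1\<^sub>m k" and G_inv3: "Gi * G = 1\<^sub>m k"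
    and G_diag: "G = Omega k j \<cdot>\<^sub>m mat_diag k x"
    and x_roots: "\<forall>s < k. x s ^ k = 1"
    and symA: "exp (\<i> * of_real (2 * real j * pi / real k)) \<cdot>\<^sub>m A = G * A * Gi"
    and symB: "exp (\<i> * of_real (2 * pi / real k)) \<cdot>\<^sub>m B = G * B * Gi"
    and symC: "exp (\<i> * of_real (pi / real k)) \<cdot>\<^sub>m C = G * C * adj (sigma (2 * real j * pi / real k))"
    and symD: "exp (\<i> * of_real (pi / real k)) \<cdot>\<^sub>m D = sigma (2 * real j * pi / real k) * D * Gi"
    and ev: "eigenvalue ((1 / Omega k j) \<cdot>\<^sub>m G) (omega k r)"
    and mult: "order (omega k r) (char_poly ((1 / Omega k j) \<cdot>\<^sub>m G)) = m"
  shows "\<forall>p \<in> {1 .. k div gcd j k}.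
           eigenvalue ((1 / Omega k j) \<cdot>\<^sub>m G) (omega k (r + int (gcd j k * p))) \<and>
           order (omega k (r + int (gcd j k * p))) (char_poly ((1 / Omega k j) \<cdot>\<^sub>m G)) = m"
proof -
  define Om where "Om = Omega k j"
  have Om0: "Om \<noteq> 0" unfolding Om_def Omega_def by simp
  define c where "c = omega k (int j)"
  have c0: "c \<noteq> 0" unfolding c_def omega_def by simp
  have hG: "G = mat_diag k (\<lambda>i. Om * x i)"
    unfolding G_diag Om_def by (rule eq_matI) (auto simp: mat_diag_def)
  have hM: "(1 / Omega k j) \<cdot>\<^sub>m G = mat_diag k x"
    unfolding hG Om_def[symmetric] by (rule eq_matI) (use Om0 in \<open>auto simp: mat_diag_def\<close>)
  have A: "A \<in> carrier_mat k k" using monad unfolding nonsingular_monad_def by blast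
  have Ainv: "invertible_mat A" using monad unfolding nonsingular_monad_def by blast
  have symA': "c \<cdot>\<^sub>m A = G * A * Gi"
    using symA unfolding c_def omega_def by (simp add: mult_ac)
  have AG: "(c \<cdot>\<^sub>m A) * G = G * A"
  proof -
    have "(c \<cdot>\<^sub>m A) * G = G * A * Gi * G" by (simp add: symA')
    also have "\<dots> = G * A * (Gi * G)"
      using A G_carrier G_inv by (metis assoc_mult_mat mult_carrier_mat)
    also have "\<dots> = G * A" using A G_carrier by (simp add: G_inv3)
    finally show ?thesis .
  qed
  have rel: "\<forall>i<k. \<forall>t<k. A $$ (i,t) \<noteq> 0 \<longrightarrow> x i = c * x t"
  proof (intro allI impI)
    fix i t assume it: "i < k" "t < k" "A $$ (i,t) \<noteq> 0"
    have e1: "((c \<cdot>\<^sub>m A) * G) $$ (i,t) = c * A $$ (i,t) * (Om * x t)"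
      unfolding hG using A it by (subst mat_diag_mult_right[of _ k]) auto
    have e2: "(G * A) $$ (i,t) = Om * x i * A $$ (i,t)"
      unfolding hG using A it by (subst mat_diag_mult_left[of _ k]) auto
    have "c * A $$ (i,t) * (Om * x t) = Om * x i * A $$ (i,t)" by (metis AG e1 e2)
    then have "Om * A $$ (i,t) * (c * x t) = Om * A $$ (i,t) * x i" by (simp add: mult_ac)
    then show "x i = c * x t" using Om0 it(3) by simp
  qed
  have dA: "det A \<noteq> 0"
  proof -
    from Ainv obtain B where AB: "A * B = 1\<^sub>m k" and BA: "B * A = 1\<^sub>m (dim_row B)"
      using A unfolding invertible_mat_def inverts_mat_def by auto
    have "dim_col B = k" using AB by (metis dim_col_mat(1) index_mult_mat(3) index_one_mat(3))
    moreover have "dim_row B = k" using BA A by (metis carrier_matD(2) index_mult_mat(3) index_one_mat(3))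
    ultimately have B: "B \<in> carrier_mat k k" by auto
    have "det A * det B = 1" using det_mult[OF A B] AB by simp
    then show ?thesis by auto
  qed
  define f where "f v = card {s. s<k \<and> x s = v}" for v
  have le: "f v \<le> f (v * (1/c))" for v
    unfolding f_def using cnt_shift[OF A dA rel c0, of v] by simp
  have ck: "c ^ k = 1"
  proof -
    have "c ^ k = omega k (int k * int j)" unfolding c_def by (rule omega_pow)
    also have "\<dots> = omega k 0" by (rule omega_cong) (use k_pos in auto)
    also have "\<dots> = 1" unfolding omega_def by simp
    finally show ?thesis .
  qed
  have dk: "(1/c) ^ k = 1" using ck by (simp add: power_one_over)
  have feq: "f (v * c ^ n) = f v" for v n
    using cyc_eq[where f=f, OF le dk k_pos] c0 by simp
  have cp: "char_poly ((1 / Omega k j) \<cdot>\<^sub>m G) = (\<Prod>a\<leftarrow>map x [0..<k]. [:-a,1:])"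
    unfolding hM
    by (subst char_poly_upper_triangular[of _ k])
       (auto simp: upper_triangular_def mat_diag_def diag_mat_def intro!: arg_cong[where f=prod_list] map_cong)
  have ordf: "order v (char_poly ((1 / Omega k j) \<cdot>\<^sub>m G)) = f v" for v
    unfolding cp order_lin_prod f_def length_filter_conv_card by (simp, intro arg_cong[where f=card]) auto
  have cpnz: "char_poly ((1 / Omega k j) \<cdot>\<^sub>m G) \<noteq> 0" unfolding cp by (rule lin_prod_nz)
  have evi: "eigenvalue ((1 / Omega k j) \<cdot>\<^sub>m G) v \<longleftrightarrow> f v \<noteq> 0" for v
    unfolding eigenvalue_root_char_poly[OF smult_carrier_mat[OF G_carrier]] order_root ordf[symmetric]
    using cpnz by simp
  show ?thesis
  proof
    fix p assume p: "p \<in> {1 .. k div gcd j k}"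
    obtain n where n: "(int j * int n) mod int k = int (gcd j k * p) mod int k"
    proof (cases "j = 0")
      case True
      then show ?thesis using that[of 0] by simp
    next
      case False
      then obtain u v where uv: "j * u = k * v + gcd j k" using bezout_nat by blast
      have "int j * int (u * p) = int (gcd j k * p) + int k * int (v * p)"
        using arg_cong[OF uv, of "\<lambda>z. int (z * p)"] by (simp add: algebra_simps)
      then show ?thesis using that[of "u * p"] by simp
    qed
    have om: "omega k (r + int (gcd j k * p)) = omega k r * c ^ n"
    proof -
      have "omega k r * c ^ n = omega k (r + int n * int j)"
        unfolding c_def omega_pow omega_mult ..
      also have "\<dots> = omega k (r + int (gcd j k * p))"
        by (rule omega_cong[OF k_pos]) (metis mod_add_right_eq mult.commute n)
      finally show ?thesis by simp
    qed
    have fr: "f (omega k (r + int (gcd j k * p))) = f (omega k r)" unfolding om feq ..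
    show "eigenvalue ((1 / Omega k j) \<cdot>\<^sub>m G) (omega k (r + int (gcd j k * p))) \<and>
           order (omega k (r + int (gcd j k * p))) (char_poly ((1 / Omega k j) \<cdot>\<^sub>m G)) = m"
      using ev mult unfolding evi ordf fr by simp
  qed
qed

end
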